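(* Fix integers $N\ge 2$ and $K\ge 1$. For every $r\in\mathbb{N}^+$, $M^{\text{RESCAL}}_{2r+1}$ subsumes $M^{\text{ComplEx}}_r$, i.e. $\pi(\mathcal{M}^{\text{ComplEx}}_r)\subseteq\pi(\mathcal{M}^{\text{RESCAL}}_{2r+1})$.
   Context: There are $N$ entities and $K$ relations. A score-based model assigns a score $s_k(i,j)\in\mathbb{R}$ to each triple, $i,j\in\{1,\dots,N\}$, $k\in\{1,\dots,K\}$; its scoring tensor $\mathcal{S}\in\mathbb{R}^{N\times N\times K}$ has frontal slices $\mathbf{S}_k$ with $[\mathbf{S}_k]_{ij}=s_k(i,j)$. For a real $N\times N$ matrix $\mathbf{S}$, $\pi(\mathbf{S})$ is the matrix of dense ranks: $\pi_{ij}(\mathbf{S})=1+$ (number of distinct values among entries of $\mathbf{S}$ strictly larger than $s_{ij}$). For tensors, $\pi$ acts slicewise; for a set $X$, $\pi(X)=\{\pi(x):x\in X\}$. RESCAL of size $r$: parameters $\mathbf{A}\in\mathbb{R}^{N\times r}$ (rows $\mathbf{a}_i$), $\mathbf{R}_1,\dots,\mathbf{R}_K\in\mathbb{R}^{r\times r}$, score $\mathbf{a}_i^T\mathbf{R}_k\mathbf{a}_j$. ComplEx of size $r$: parameters $\mathbf{A}\in\mathbb{C}^{N\times r}$ (rows $\mathbf{a}_i$), $\mathbf{R}\in\mathbb{C}^{K\times r}$ (rows $\mathbf{r}_k$), score $s_k(i,j)=\mathrm{Re}(\mathbf{a}_i^T\mathrm{diag}(\mathbf{r}_k)\overline{\mathbf{a}_j})$,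 where $\overline{\cdot}$ is complex conjugation. $\mathcal{M}^t_r$ is the set of scoring tensors of all models of type $t$ and size $r$. A class subsumes another if its set of representable ranking tensors $\pi(\mathcal{M})$ contains that of the other. *)

theory Defs
  imports Complex_Main
begin

text \<open>Entities are indexed 0..N-1, relations 0..K-1, embedding coordinates 0..r-1.
  A scoring tensor is a function S i j k (entity i, entity j, relation k).\<close>

type_synonym score_tensor = "nat \<Rightarrow> nat \<Rightarrow> nat \<Rightarrow> real"
type_synonym rank_tensor = "nat \<Rightarrow> nat \<Rightarrow> nat \<Rightarrow> nat"

definition dense_rank :: "nat \<Rightarrow> nat \<Rightarrow> score_tensor \<Rightarrow> rank_tensor" where
  "dense_rank N K S = (\<lambda>i j k. if i < N \<and> j < N \<and> k < K then
      1 + card {v. (\<exists>i' j'. i' < N \<and> j' < N \<and> v = S i' j' k) \<and> v > S i j k}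
    else 0)"

definition rank_set :: "nat \<Rightarrow> nat \<Rightarrow> score_tensor set \<Rightarrow> rank_tensor set" where
  "rank_set N K M = dense_rank N K ` M"

definition rescal_tensors :: "nat \<Rightarrow> nat \<Rightarrow> nat \<Rightarrow> score_tensor set" where
  "rescal_tensors N K r = {S. \<exists>(A :: nat \<Rightarrow> nat \<Rightarrow> real) (R :: nat \<Rightarrow> nat \<Rightarrow> nat \<Rightarrow> real).
      \<forall>i<N. \<forall>j<N. \<forall>k<K. S i j k = (\<Sum>l<r. \<Sum>m<r. A i l * R k l m * A j m)}"

definition complex_tensors :: "nat \<Rightarrow> nat \<Rightarrow> nat \<Rightarrow> score_tensor set" where
  "complex_tensors N K r = {S. \<exists>(A :: nat \<Rightarrow> nat \<Rightarrow> complex) (R :: nat \<Rightarrow> nat \<Rightarrow> complex).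
      \<forall>i<N. \<forall>j<N. \<forall>k<K. S i j k = Re (\<Sum>l<r. A i l * R k l * cnj (A j l))}"

end

theory Submission
  imports Defs
begin

lemma sum_pairs_lt: "(\<Sum>i<2*n. g i) = (\<Sum>i<n. g (2*i) + g (2*i+1::nat))"
  by (induction n) (auto simp: algebra_simps)

lemma sum_shift_last: "(\<Sum>i<2*n+1. g i) = (\<Sum>i<2*n. g i) + g (2*n::nat)"
  by simp

lemma complex_sub_rescal: "complex_tensors N K r \<subseteq> rescal_tensors N K (2*r+1)"
proof
  fix S assume "S \<in> complex_tensors N K r"
  then obtain A R where H: "\<forall>i<N. \<forall>j<N. \<forall>k<K. S i j k = Re (\<Sum>l<r. A i l * R k l * cnj (A j l))"
    unfolding complex_tensors_def by blast
  define A' where "A' i l = (if l < 2*r then (if even l then Re (A i (l div 2)) else Im (A i (l div 2))) else 0)" for i l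
  define R' where "R' k l m = (if l div 2 = m div 2 then
      (if even l then (if even m then Re (R k (l div 2)) else Im (R k (l div 2)))
       else (if even m then - Im (R k (l div 2)) else Re (R k (l div 2)))) else 0)" for k l m
  have key: "(\<Sum>l<2*r+1. \<Sum>m<2*r+1. A' i l * R' k l m * A' j m) = Re (\<Sum>l<r. A i l * R k l * cnj (A j l))" for i j k
  proof -
    define F where "F l = (\<Sum>m<2*r+1. A' i l * R' k l m * A' j m)" for l
    have inner: "F l =
       (\<Sum>b<r. A' i l * R' k l (2*b) * A' j (2*b) + A' i l * R' k l (2*b+1) * A' j (2*b+1))" for l
      unfolding F_def by (simp only: sum_shift_last sum_pairs_lt) (simp add: A'_def)
    have inner2: "F l = (\<Sum>b<r. if b = l div 2 then A' i l * R' k l (2*b) * A' j (2*b) + A' i l * R' k l (2*b+1) * A' j (2*b+1) else 0)" for l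
      unfolding inner by (rule sum.cong) (auto simp: R'_def)
    have F0: "F (2*a) = Re (A i a) * (Re (R k a) * Re (A j a) + Im (R k a) * Im (A j a))" if "a < r" for a
      unfolding inner2 using that by (simp add: sum.delta' A'_def R'_def algebra_simps)
    have F1: "F (2*a+1) = Im (A i a) * (- Im (R k a) * Re (A j a) + Re (R k a) * Im (A j a))" if "a < r" for a
      unfolding inner2 using that by (simp add: sum.delta' A'_def R'_def algebra_simps)
    have F2: "F (2*r) = 0" unfolding F_def by (simp add: A'_def)
    have "(\<Sum>l<2*r+1. F l) = (\<Sum>a<r. F (2*a) + F (2*a+1))"
      by (simp only: sum_shift_last sum_pairs_lt F2)
    also have "\<dots> = (\<Sum>a<r. Re (A i a * R k a * cnj (A j a)))"
      proof (rule sum.cong)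
      fix a assume "a \<in> {..<r}"
      hence a: "a < r" by simp
      show "F (2*a) + F (2*a+1) = Re (A i a * R k a * cnj (A j a))"
        unfolding F0[OF a] F1[OF a] by (simp add: algebra_simps)
    qed simp
    also have "\<dots> = Re (\<Sum>l<r. A i l * R k l * cnj (A j l))" by (simp add: Re_sum)
    finally show ?thesis by (simp only: F_def)
  qed
  show "S \<in> rescal_tensors N K (2*r+1)"
    unfolding rescal_tensors_def mem_Collect_eq
    apply (rule exI[of _ A'], rule exI[of _ R'])
    using H key by presburger
qed

theorem corollary1:
  fixes N K r :: nat
  assumes "N \<ge> 2" and "K \<ge> 1" and "r \<ge> 1"
  shows "rank_set N K (complex_tensors N K r) \<subseteq> rank_set N K (rescal_tensors N K (2 * r + 1))"
  unfolding rank_set_def using complex_sub_rescal by (rule image_mono)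

end
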